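(* Let $n$ be an even positive integer and let $\mathbb{F}$ be a field with $\operatorname{char}(\mathbb{F})\neq 2$ and $|\mathbb{F}|\geq n^2+1$. Let $Q_n$ denote the set of all $n\times n$ skew-symmetric matrices over $\mathbb{F}$. Let $\phi,\psi:Q_n\to Q_n$ be maps such that $\psi$ is surjective, $\psi(0)=0$, and $$\det(\phi(x)+\psi(y))=\det(x+y)\qquad\text{for all } x,y\in Q_n.$$ Then $\phi=\psi$, and $\psi$ is a bijective linear map satisfying $\det(\psi(x))=\det(x)$ for all $x\in Q_n$.
   Context: A matrix $x$ is skew-symmetric if $x^t=-x$. *)

theory Defs
  imports "HOL-Analysis.Analysis"
begin

definition skew_symmetric :: "'a::field^'n^'n \<Rightarrow> bool" where
  "skew_symmetric x \<longleftrightarrow> transpose x = - x"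

definition Qn :: "('a::field^'n^'n) set" where
  "Qn = {x. skew_symmetric x}"

definition mat_smult :: "'a::field \<Rightarrow> 'a^'n^'m \<Rightarrow> 'a^'n^'m" where
  "mat_smult c x = (\<chi> i j. c * x $ i $ j)"

definition linear_on_Qn :: "('a::field^'n^'n \<Rightarrow> 'a^'n^'n) \<Rightarrow> bool" where
  "linear_on_Qn f \<longleftrightarrow>
     (\<forall>x\<in>Qn. \<forall>y\<in>Qn. f (x + y) = f x + f y) \<and>
     (\<forall>c. \<forall>x\<in>Qn. f (mat_smult c x) = mat_smult c (f x))"

end

theory Submission
  imports Defs "HOL-Computational_Algebra.Polynomial"
begin

definition evm :: "'a::comm_ring_1 poly^'n^'m \<Rightarrow> 'a \<Rightarrow> 'a^'n^'m" where
  "evm M x = (\<chi> i j. poly (M$i$j) x)"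

definition PM :: "'a::comm_ring_1^'n^'m \<Rightarrow> 'a^'n^'m \<Rightarrow> 'a poly^'n^'m" where
  "PM A B = (\<chi> i j. [:B$i$j, A$i$j:])"

definition Lin :: "'a::comm_ring_1^'n^'n \<Rightarrow> 'a^'n^'n \<Rightarrow> 'a" where
  "Lin A B = (\<Sum>p\<in>{p. p permutes (UNIV::'n set)}. of_int (sign p) *
      (\<Sum>i\<in>UNIV. A$i$p i * (\<Prod>k\<in>UNIV-{i}. B$k$p k)))"

lemma poly_det: "poly (det M) x = det (evm M x)"
  by (simp add: det_def evm_def poly_sum poly_prod)

lemma degree_det_le:
  fixes M :: "'a::comm_ring_1 poly^'n^'n"
  assumes "\<And>i j. degree (M$i$j) \<le> d"
  shows "degree (det M) \<le> CARD('n) * d"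
  unfolding det_def
proof (rule degree_sum_le)
  fix p assume "p \<in> {p. p permutes (UNIV::'n set)}"
  have "degree (\<Prod>i\<in>UNIV. M$i$p i) \<le> (\<Sum>i\<in>UNIV. degree (M$i$p i))"
    using degree_prod_sum_le[of UNIV "\<lambda>i. M$i$p i"] by (simp add: o_def)
  also have "\<dots> \<le> (\<Sum>i\<in>(UNIV::'n set). d)" by (rule sum_mono) (rule assms)
  also have "\<dots> = CARD('n) * d" by simp
  finally have "degree (\<Prod>i\<in>UNIV. M$i$p i) \<le> CARD('n) * d" .
  moreover have "degree (of_int (sign p) :: 'a poly) = 0" by (simp add: of_int_poly)
  ultimately show "degree (of_int (sign p) * (\<Prod>i\<in>UNIV. M$i$p i)) \<le> CARD('n) * d"
    using degree_mult_le[of "of_int (sign p) :: 'a poly" "\<Prod>i\<in>UNIV. M$i$p i"] by simp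
qed simp


lemma pCons2_mult: "[:c, d:] * P = smult c P + pCons 0 (smult d P)"
  by (simp add: mult_pCons_left)

lemma coeff_prod_lin:
  fixes a b :: "'i \<Rightarrow> 'a::comm_ring_1"
  assumes "finite S"
  shows "coeff (\<Prod>i\<in>S. [:b i, a i:]) 0 = (\<Prod>i\<in>S. b i) \<and>
         coeff (\<Prod>i\<in>S. [:b i, a i:]) 1 = (\<Sum>i\<in>S. a i * (\<Prod>k\<in>S-{i}. b k)) \<and>
         degree (\<Prod>i\<in>S. [:b i, a i:]) \<le> card S \<and>
         coeff (\<Prod>i\<in>S. [:b i, a i:]) (card S) = (\<Prod>i\<in>S. a i)"
  using assms
proof (induction S rule: finite_induct)
  case empty
  then show ?case by simp
next
  case (insert x S)
  let ?P = "\<Prod>i\<in>S. [:b i, a i:]"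
  have e: "(\<Prod>i\<in>insert x S. [:b i, a i:]) = smult (b x) ?P + pCons 0 (smult (a x) ?P)"
    using insert by (simp add: pCons2_mult)
  have c0: "coeff (\<Prod>i\<in>insert x S. [:b i, a i:]) 0 = (\<Prod>i\<in>insert x S. b i)"
    using insert by (simp add: e)
  have s1: "(\<Sum>i\<in>insert x S. a i * (\<Prod>k\<in>insert x S-{i}. b k)) =
      a x * (\<Prod>k\<in>S. b k) + b x * (\<Sum>i\<in>S. a i * (\<Prod>k\<in>S-{i}. b k))"
  proof -
    have "(\<Sum>i\<in>S. a i * (\<Prod>k\<in>insert x S-{i}. b k)) = (\<Sum>i\<in>S. b x * (a i * (\<Prod>k\<in>S-{i}. b k)))"
    proof (rule sum.cong)
      fix i assume "i \<in> S"
      then have "insert x S - {i} = insert x (S - {i})" "x \<notin> S - {i}" using insert by auto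
      then show "a i * (\<Prod>k\<in>insert x S-{i}. b k) = b x * (a i * (\<Prod>k\<in>S-{i}. b k))"
        using insert by (simp add: ac_simps)
    qed simp
    moreover have "insert x S - {x} = S" using insert by auto
    ultimately show ?thesis using insert by (simp add: sum_distrib_left)
  qed
  have c1: "coeff (\<Prod>i\<in>insert x S. [:b i, a i:]) 1 = (\<Sum>i\<in>insert x S. a i * (\<Prod>k\<in>insert x S-{i}. b k))"
    using insert by (simp add: e s1 coeff_pCons ac_simps split: nat.splits)
  have dg: "degree (\<Prod>i\<in>insert x S. [:b i, a i:]) \<le> card (insert x S)"
  proof -
    have "degree (\<Prod>i\<in>insert x S. [:b i, a i:]) \<le> (\<Sum>i\<in>insert x S. degree [:b i, a i:])"
      using degree_prod_sum_le[of "insert x S" "\<lambda>i. [:b i, a i:]"] insert by (simp add: o_def)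
    also have "\<dots> \<le> (\<Sum>i\<in>insert x S. 1)" by (rule sum_mono) simp
    finally show ?thesis by simp
  qed
  have cn: "coeff (\<Prod>i\<in>insert x S. [:b i, a i:]) (card (insert x S)) = (\<Prod>i\<in>insert x S. a i)"
  proof -
    have "coeff ?P (Suc (card S)) = 0" using insert by (intro coeff_eq_0) simp
    then show ?thesis using insert by (simp add: e)
  qed
  show ?case using c0 c1 dg cn by blast
qed

lemma coeff_det_PM1: "coeff (det (PM A B)) 1 = Lin A B"
  unfolding det_def Lin_def coeff_sum
proof (rule sum.cong)
  fix p assume "p \<in> {p. p permutes (UNIV::'b set)}"
  show "coeff (of_int (sign p) * (\<Prod>i\<in>UNIV. PM A B $ i $ p i)) 1 =
    of_int (sign p) * (\<Sum>i\<in>UNIV. A $ i $ p i * (\<Prod>k\<in>UNIV - {i}. B $ k $ p k))"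
    using coeff_prod_lin[where S=UNIV and a="\<lambda>i. A$i$p i" and b="\<lambda>i. B$i$p i"]
    by (simp add: PM_def of_int_poly)
qed simp

lemma coeff_det_PMn: "coeff (det (PM A B)) CARD('n) = det (A::'a::comm_ring_1^'n^'n)"
  unfolding det_def coeff_sum
proof (rule sum.cong)
  fix p assume "p \<in> {p. p permutes (UNIV::'n set)}"
  show "coeff (of_int (sign p) * (\<Prod>i\<in>UNIV. PM A B $ i $ p i)) CARD('n) =
    of_int (sign p) * (\<Prod>i\<in>UNIV. A $ i $ p i)"
    using coeff_prod_lin[where S=UNIV and a="\<lambda>i. A$i$p i" and b="\<lambda>i. B$i$p i"]
    by (simp add: PM_def of_int_poly)
qed simp

lemma degree_det_PM: "degree (det (PM (A::'a::comm_ring_1^'n^'n) B)) \<le> CARD('n)"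
  using degree_det_le[of "PM A B" 1] by (simp add: PM_def degree_pCons_le)

lemma poly_det_PM: "poly (det (PM A B)) x = det (B + mat_smult x A)"
proof -
  have "evm (PM A B) x = B + mat_smult x A"
    by (simp add: evm_def PM_def mat_smult_def vec_eq_iff algebra_simps)
  then show ?thesis by (simp add: poly_det)
qed


lemma Lin_mat1: "Lin Z (mat 1 :: 'a::comm_ring_1^'n^'n) = trace Z"
proof -
  have "Lin Z (mat 1 :: 'a^'n^'n) = (\<Sum>p\<in>{p. p permutes (UNIV::'n set)}. if p = id then trace Z else 0)"
    unfolding Lin_def
  proof (rule sum.cong)
    fix p assume p: "p \<in> {p. p permutes (UNIV::'n set)}"
    show "of_int (sign p) * (\<Sum>i\<in>UNIV. Z $ i $ p i * (\<Prod>k\<in>UNIV - {i}. (mat 1 :: 'a^'n^'n) $ k $ p k))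
        = (if p = id then trace Z else 0)"
    proof (cases "p = id")
      case True
      then show ?thesis by (simp add: trace_def mat_def sign_id)
    next
      case False
      have "(\<Prod>k\<in>UNIV - {i}. (mat 1 :: 'a^'n^'n) $ k $ p k) = 0" for i
      proof -
        have "\<exists>k. k \<noteq> i \<and> p k \<noteq> k"
        proof (rule ccontr)
          assume "\<not> ?thesis"
          then have h: "\<And>k. k \<noteq> i \<Longrightarrow> p k = k" by blast
          have "p i = i"
          proof (rule ccontr)
            assume "p i \<noteq> i"
            then have "p (p i) = p i" using h by blast
            then have "p i = i" using p by (metis mem_Collect_eq permutes_inj injD)
            then show False using \<open>p i \<noteq> i\<close> by simp
          qed
          then have "p = id" using h by (metis id_apply ext)
          then show False using False by simp
        qed
        then obtain k where "k \<noteq> i" "p k \<noteq> k" by blast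
        then show ?thesis by (intro prod_zero) (auto simp: mat_def intro!: bexI[of _ k])
      qed
      then show ?thesis using False by simp
    qed
  qed simp
  also have "\<dots> = trace Z"
    by (simp add: sum.delta' permutes_id)
  finally show ?thesis .
qed

definition constm :: "'a::comm_ring_1^'n^'m \<Rightarrow> 'a poly^'n^'m" where
  "constm M = (\<chi> i j. [:M$i$j:])"

lemma det_constm: "det (constm (M::'a::comm_ring_1^'n^'n)) = [:det M:]"
proof -
  have "degree (det (constm M)) \<le> CARD('n) * 0"
    by (rule degree_det_le) (simp add: constm_def)
  then have "det (constm M) = [:coeff (det (constm M)) 0:]"
    by (metis degree_0_id mult_0_right le_zero_eq)
  moreover have "coeff (det (constm M)) 0 = det M"
  proof -
    have "coeff (det (constm M)) 0 = poly (det (constm M)) 0" by (simp add: poly_0_coeff_0)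
    also have "\<dots> = det M" by (simp add: poly_det evm_def constm_def)
    finally show ?thesis .
  qed
  ultimately show ?thesis by simp
qed

lemma sum_pCons2: "(\<Sum>k\<in>S. [:a k, b k:]) = [:(\<Sum>k\<in>S. a k), (\<Sum>k\<in>S. b k):]"
  by (induction S rule: infinite_finite_induct) auto

lemma constm_PM: "constm M ** PM Z (mat 1) = PM (M ** Z) (M :: 'a::comm_ring_1^'n^'n)"
proof -
  have "(constm M ** PM Z (mat 1)) $ i $ j = PM (M ** Z) M $ i $ j" for i j
  proof -
    have "(constm M ** PM Z (mat 1)) $ i $ j = (\<Sum>k\<in>UNIV. [:M$i$k * (mat 1::'a^'n^'n)$k$j, M$i$k * Z$k$j:])"
      by (simp add: matrix_matrix_mult_def constm_def PM_def ac_simps)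
    also have "\<dots> = [:(\<Sum>k\<in>UNIV. M$i$k * (mat 1::'a^'n^'n)$k$j), (\<Sum>k\<in>UNIV. M$i$k * Z$k$j):]"
      by (rule sum_pCons2)
    also have "\<dots> = PM (M ** Z) M $ i $ j"
      by (simp add: PM_def matrix_matrix_mult_def mat_def if_distrib cong: if_cong)
    finally show ?thesis .
  qed
  then show ?thesis by (simp add: vec_eq_iff)
qed

lemma Lin_mult: "Lin (M ** Z) M = det M * trace (Z :: 'a::comm_ring_1^'n^'n)"
proof -
  have "det (PM (M ** Z) M) = [:det M:] * det (PM Z (mat 1))"
    by (metis constm_PM det_mul det_constm)
  then have "coeff (det (PM (M ** Z) M)) 1 = det M * coeff (det (PM Z (mat 1))) 1"
    by simp
  then show ?thesis using coeff_det_PM1[of "M**Z" M] coeff_det_PM1[of Z "mat 1"] Lin_mat1[of Z] by simp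
qed

lemma poly_Lin: "poly (Lin A B) x = Lin (evm A x) (evm B x)"
  by (simp add: Lin_def evm_def poly_sum poly_prod)


lemma Qn_iff: "x \<in> Qn \<longleftrightarrow> (\<forall>i j. x$j$i = - x$i$j)"
  unfolding Qn_def skew_symmetric_def transpose_def mem_Collect_eq vec_eq_iff by simp

lemma QnD: "x \<in> Qn \<Longrightarrow> x$j$i = - x$i$j"
  unfolding Qn_iff by blast

lemma Qn_diag: "x \<in> Qn \<Longrightarrow> (2::'a::field) \<noteq> 0 \<Longrightarrow> x$i$i = (0::'a)"
proof -
  assume a: "x \<in> Qn" "(2::'a) \<noteq> 0"
  have h: "x$i$i = - x$i$i" using QnD[OF a(1), of i i] .
  have "x$i$i + x$i$i = 0" by (metis h add.right_inverse)
  then have "2 * x$i$i = 0" by (metis mult_2)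
  then show ?thesis using a(2) by (metis no_zero_divisors)
qed

lemma Qn_add: "x \<in> Qn \<Longrightarrow> y \<in> Qn \<Longrightarrow> x + y \<in> Qn"
  unfolding Qn_iff
proof (intro allI)
  fix i j assume h: "\<forall>i j. x$j$i = - x$i$j" "\<forall>i j. y$j$i = - y$i$j"
  have "x$j$i = - x$i$j" "y$j$i = - y$i$j" using h by blast+
  then show "(x + y)$j$i = - (x + y)$i$j" by simp
qed
lemma Qn_diff: "x \<in> Qn \<Longrightarrow> y \<in> Qn \<Longrightarrow> x - y \<in> Qn"
  unfolding Qn_iff
proof (intro allI)
  fix i j assume h: "\<forall>i j. x$j$i = - x$i$j" "\<forall>i j. y$j$i = - y$i$j"
  have "x$j$i = - x$i$j" "y$j$i = - y$i$j" using h by blast+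
  then show "(x - y)$j$i = - (x - y)$i$j" by simp
qed
lemma Qn_neg: "x \<in> Qn \<Longrightarrow> - x \<in> Qn"
  unfolding Qn_iff
proof (intro allI)
  fix i j assume h: "\<forall>i j. x$j$i = - x$i$j"
  have "x$j$i = - x$i$j" using h by blast
  then show "(- x)$j$i = - (- x)$i$j" by simp
qed
lemma Qn_zero: "0 \<in> Qn"
  by (simp add: Qn_iff)
lemma Qn_smult: "x \<in> Qn \<Longrightarrow> mat_smult c x \<in> Qn"
  unfolding Qn_iff
proof (intro allI)
  fix i j assume h: "\<forall>i j. x$j$i = - x$i$j"
  have "x$j$i = - x$i$j" using h by blast
  then show "(mat_smult c x)$j$i = - (mat_smult c x)$i$j" by (simp add: mat_smult_def)
qed

lemma avoid:
  fixes K :: "'a set"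
  assumes "infinite (UNIV::'a set) \<or> card (UNIV::'a set) \<ge> N + 1" "finite K" "card K \<le> N"
  shows "\<exists>c. c \<notin> K"
proof (rule ccontr)
  assume "\<not> ?thesis"
  then have KU: "K = UNIV" by auto
  show False
  proof (cases "finite (UNIV::'a set)")
    case True
    then have "card (UNIV::'a set) \<ge> N + 1" using assms(1) by blast
    moreover have "card (UNIV::'a set) \<le> N" using assms(3) KU by simp
    ultimately show False by linarith
  next
    case False
    then show False using assms(2) KU by simp
  qed
qed

lemma poly_eq_big:
  fixes p q :: "'a::field poly"
  assumes "infinite (UNIV::'a set) \<or> card (UNIV::'a set) \<ge> N + 1"
    "degree p \<le> N" "degree q \<le> N" "\<And>x. poly p x = poly q x"
  shows "p = q"
proof (rule ccontr)
  assume ne: "p \<noteq> q"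
  let ?K = "{x. poly (p - q) x = 0}"
  have "finite ?K" using ne by (intro poly_roots_finite) simp
  moreover have "card ?K \<le> N"
  proof -
    have "card ?K \<le> degree (p - q)" using ne by (intro card_poly_roots_bound) simp
    also have "\<dots> \<le> N" using assms(2,3) degree_diff_le by blast
    finally show ?thesis .
  qed
  ultimately obtain c where "c \<notin> ?K" using avoid[OF assms(1)] by blast
  then show False using assms(4) by simp
qed

lemma poly_avoid:
  fixes p :: "'a::field poly"
  assumes "infinite (UNIV::'a set) \<or> card (UNIV::'a set) \<ge> N + 1"
    "p \<noteq> 0" "degree p + card K \<le> N" "finite K"
  shows "\<exists>c. c \<notin> K \<and> poly p c \<noteq> 0"
proof -
  let ?R = "{x. poly p x = 0}"
  have "finite ?R" using assms by (intro poly_roots_finite) simp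
  have "card ?R \<le> degree p" using assms by (intro card_poly_roots_bound) simp
  have "card (?R \<union> K) \<le> card ?R + card K" by (rule card_Un_le)
  then have "card (?R \<union> K) \<le> N" using \<open>card ?R \<le> degree p\<close> assms by linarith
  then obtain c where "c \<notin> ?R \<union> K" using avoid[OF assms(1)] \<open>finite ?R\<close> assms(4) by blast
  then show ?thesis by auto
qed


lemma mmul_rneg: "(A::'a::comm_ring_1^'n^'m) ** (- B) = - (A ** B)"
  by (simp add: matrix_matrix_mult_def vec_eq_iff sum_negf)
lemma mmul_lneg: "(- A::'a::comm_ring_1^'n^'m) ** B = - (A ** B)"
  by (simp add: matrix_matrix_mult_def vec_eq_iff sum_negf)

lemma inv_exists:
  fixes M :: "'a::field^'n^'n"
  assumes "det M \<noteq> 0"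
  obtains Mi where "M ** Mi = mat 1" "Mi ** M = mat 1"
  using assms invertible_det_nz[of M] unfolding invertible_def by blast

lemma inv_skew:
  fixes M :: "'a::field^'n^'n"
  assumes "M \<in> Qn" "M ** Mi = mat 1" "Mi ** M = mat 1"
  shows "Mi \<in> Qn"
proof -
  have tM: "transpose M = - M" using assms(1) by (simp add: Qn_def skew_symmetric_def)
  have "transpose (M ** Mi) = mat 1" using assms(2) by (simp add: transpose_mat)
  then have "transpose Mi ** transpose M = mat 1" by (simp add: matrix_transpose_mul)
  then have "transpose Mi ** (- M) = mat 1" using tM by simp
  then have L: "(- transpose Mi) ** M = mat 1"
    by (simp add: mmul_rneg mmul_lneg)
  have "- transpose Mi = (- transpose Mi) ** (M ** Mi)" using assms(2) by simp
  also have "\<dots> = ((- transpose Mi) ** M) ** Mi" by (rule matrix_mul_assoc)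
  also have "\<dots> = Mi" using L by simp
  finally have "transpose Mi = - Mi" by (metis minus_minus)
  then show ?thesis by (simp add: Qn_def skew_symmetric_def)
qed

lemma Lin_inv:
  fixes M :: "'a::field^'n^'n"
  assumes "M ** Mi = mat 1"
  shows "Lin X M = det M * trace (Mi ** X)"
proof -
  have "M ** (Mi ** X) = (M ** Mi) ** X" by (rule matrix_mul_assoc)
  then have "M ** (Mi ** X) = X" using assms by (simp add: matrix_mul_lid)
  then show ?thesis using Lin_mult[of M "Mi ** X"] by simp
qed


definition Eij :: "'n \<Rightarrow> 'n \<Rightarrow> 'a::field^'n^'n" where
  "Eij i j = (\<chi> a b. if a = i \<and> b = j then 1 else if a = j \<and> b = i then -1 else 0)"

lemma Eij_Qn: "i \<noteq> j \<Longrightarrow> Eij i j \<in> Qn"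
  unfolding Qn_iff Eij_def by simp

lemma trace_Eij:
  fixes S :: "'a::field^'n^'n"
  assumes "i \<noteq> j"
  shows "trace (S ** Eij i j) = S$j$i - S$i$j"
proof -
  have "trace (S ** Eij i j) = (\<Sum>a\<in>UNIV. \<Sum>b\<in>UNIV. S$a$b * Eij i j $ b $ a)"
    unfolding trace_def matrix_matrix_mult_def by simp
  also have "\<dots> = (\<Sum>a\<in>UNIV. (if a = j then S$j$i else 0) - (if a = i then S$i$j else 0))"
  proof (rule sum.cong[OF refl])
    fix a :: 'n
    have "(\<Sum>b\<in>UNIV. S$a$b * Eij i j $ b $ a) =
        (\<Sum>b\<in>UNIV. (if b = i \<and> a = j then S$a$b else 0) - (if b = j \<and> a = i then S$a$b else 0))"
    proof (rule sum.cong[OF refl])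
      fix b :: 'n
      show "S$a$b * Eij i j $ b $ a = (if b = i \<and> a = j then S$a$b else 0) - (if b = j \<and> a = i then S$a$b else 0)"
        unfolding Eij_def using assms by auto
    qed
    also have "\<dots> = (if a = j then S$j$i else 0) - (if a = i then S$i$j else 0)"
      unfolding sum_subtractf by (simp add: sum.delta)
    finally show "(\<Sum>b\<in>UNIV. S$a$b * Eij i j $ b $ a) = (if a = j then S$j$i else 0) - (if a = i then S$i$j else 0)" .
  qed
  also have "\<dots> = S$j$i - S$i$j" unfolding sum_subtractf by simp
  finally show ?thesis .
qed


lemma pairing_exists:
  assumes "even CARD('n)"
  shows "\<exists>(\<tau>::'n::finite \<Rightarrow> 'n) (s::'n \<Rightarrow> 'a::field). (\<forall>a. \<tau> (\<tau> a) = a) \<and> (\<forall>a. \<tau> a \<noteq> a)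
     \<and> (\<forall>a. s (\<tau> a) = - s a) \<and> (\<forall>a. s a * s a = 1)"
proof -
  let ?n = "CARD('n)"
  obtain h where h: "bij_betw h {0..<?n} (UNIV::'n set)"
  proof -
    have "finite (UNIV::'n set)" by simp
    from ex_bij_betw_nat_finite[OF this] show ?thesis using that by auto
  qed
  define ix where "ix = inv_into {0..<?n} h"
  have ix1: "ix a < ?n" for a
    using h unfolding ix_def by (metis atLeastLessThan_iff bij_betw_def inv_into_into UNIV_I)
  have ix2: "h (ix a) = a" for a
    using h unfolding ix_def by (metis bij_betw_def f_inv_into_f UNIV_I)
  have ix3: "k < ?n \<Longrightarrow> ix (h k) = k" for k
    using h unfolding ix_def by (metis atLeastLessThan_iff bij_betw_def inv_into_f_f zero_le)
  define pr :: "nat \<Rightarrow> nat" where "pr k = (if even k then k + 1 else k - 1)" for k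
  have pr1: "k < ?n \<Longrightarrow> pr k < ?n" for k
    using assms unfolding pr_def by (cases "even k") (auto, presburger)
  have pr2: "pr (pr k) = k" for k unfolding pr_def by (cases "even k") auto
  have pr3: "pr k \<noteq> k" for k unfolding pr_def by (cases "even k"; cases k) auto
  have pr4: "even (pr k) \<longleftrightarrow> \<not> even k" for k unfolding pr_def by (cases "even k"; cases k) auto
  define \<tau> where "\<tau> a = h (pr (ix a))" for a
  define s :: "'n \<Rightarrow> 'a" where "s a = (if even (ix a) then 1 else -1)" for a
  have t1: "ix (\<tau> a) = pr (ix a)" for a unfolding \<tau>_def using ix3 pr1 ix1 by blast
  have "\<tau> (\<tau> a) = a" for a using t1 pr2 ix2 unfolding \<tau>_def by simp
  moreover have "\<tau> a \<noteq> a" for a using t1 pr3 by metis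
  moreover have "s (\<tau> a) = - s a" for a unfolding s_def using t1 pr4 by simp
  moreover have "s a * s a = 1" for a unfolding s_def by simp
  ultimately show ?thesis by blast
qed

lemma inv_skew_exists:
  assumes "even CARD('n)"
  shows "\<exists>Y::'a::field^'n^'n. Y \<in> Qn \<and> det Y \<noteq> 0"
proof -
  obtain \<tau> :: "'n \<Rightarrow> 'n" and s :: "'n \<Rightarrow> 'a" where
    t: "\<And>a. \<tau> (\<tau> a) = a" "\<And>a. \<tau> a \<noteq> a" "\<And>a. s (\<tau> a) = - s a" "\<And>a. s a * s a = 1"
    using pairing_exists[OF assms] by blast
  define Y :: "'a^'n^'n" where "Y = (\<chi> a b. if b = \<tau> a then s a else 0)"
  have tt: "a = \<tau> b \<longleftrightarrow> b = \<tau> a" for a b using t(1) by metis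
  have "Y \<in> Qn" unfolding Qn_iff
  proof (intro allI)
    fix i j
    show "Y$j$i = - Y$i$j"
      unfolding Y_def using t(3)[of i] tt[of i j] by auto
  qed
  moreover have "Y ** (- Y) = mat 1"
  proof -
    have "(Y ** Y) $ a $ c = - (mat 1 :: 'a^'n^'n) $ a $ c" for a c
    proof -
      have "(Y ** Y) $ a $ c = (\<Sum>b\<in>UNIV. Y$a$b * Y$b$c)"
        unfolding matrix_matrix_mult_def by simp
      also have "\<dots> = (\<Sum>b\<in>UNIV. if b = \<tau> a then s a * Y$b$c else 0)"
        by (rule sum.cong[OF refl]) (simp add: Y_def)
      also have "\<dots> = s a * Y$(\<tau> a)$c" by (simp add: sum.delta')
      also have "\<dots> = - (mat 1 :: 'a^'n^'n) $ a $ c"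
        unfolding Y_def mat_def using t(1)[of a] t(3)[of a] t(4)[of a] by auto
      finally show ?thesis .
    qed
    then have "Y ** Y = - mat 1" by (simp add: vec_eq_iff)
    then show ?thesis by (simp add: mmul_rneg)
  qed
  then have "det Y * det (- Y) = 1" by (metis det_I det_mul)
  then have "det Y \<noteq> 0" by auto
  ultimately show ?thesis by blast
qed

lemma mat_smult_0: "mat_smult 0 M = 0"
  by (simp add: mat_smult_def vec_eq_iff)

lemma det_smult: "det (mat_smult c (M::'a::field^'n^'n)) = c ^ CARD('n) * det M"
proof -
  have "det (mat_smult c M) = (\<Sum>p\<in>{p. p permutes (UNIV::'n set)}. c ^ CARD('n) * (of_int (sign p) * (\<Prod>i\<in>UNIV. M$i$p i)))"
    unfolding det_def mat_smult_def by (simp add: prod.distrib ac_simps)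
  then show ?thesis by (simp add: det_def sum_distrib_left)
qed

lemma mmul_add_r: "((A::'a::field^'n^'m) + B) ** C = A ** C + B ** C"
  by (simp add: matrix_matrix_mult_def vec_eq_iff sum.distrib algebra_simps)

lemma mmul_smult_l: "(mat_smult c (A::'a::field^'n^'m)) ** C = mat_smult c (A ** C)"
  by (simp add: matrix_matrix_mult_def vec_eq_iff mat_smult_def sum_distrib_left ac_simps)

lemma trace_smult: "trace (mat_smult c (A::'a::field^'n^'n)) = c * trace A"
  by (simp add: trace_def mat_smult_def sum_distrib_left)

lemma perturb_exists:
  fixes A B :: "'a::field^'n^'n"
  assumes fsz: "infinite (UNIV::'a set) \<or> card (UNIV::'a set) \<ge> N + 1"
    and nN: "CARD('n) + 1 \<le> N" and dA: "det A \<noteq> 0"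
  shows "\<exists>c. c \<noteq> 0 \<and> det (A + mat_smult c B) \<noteq> 0"
proof -
  let ?p = "det (PM B A)"
  have "poly ?p 0 = det A" by (simp add: poly_det_PM mat_smult_0)
  then have "?p \<noteq> 0" using dA by auto
  moreover have "degree ?p + card {0::'a} \<le> N" using degree_det_PM[of B A] nN by simp
  ultimately obtain c where "c \<notin> {0}" "poly ?p c \<noteq> 0"
    using poly_avoid[OF fsz, of ?p "{0}"] by blast
  then show ?thesis by (auto simp: poly_det_PM)
qed


lemma trace_test_zero:
  fixes D :: "'a::field^'n^'n"
  assumes ev: "even CARD('n)" and two: "(2::'a) \<noteq> 0"
    and fsz: "infinite (UNIV::'a set) \<or> card (UNIV::'a set) \<ge> N + 1"
    and nN: "CARD('n) + 1 \<le> N" and DQ: "D \<in> Qn"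
    and H: "\<And>S. S \<in> Qn \<Longrightarrow> det S \<noteq> 0 \<Longrightarrow> trace (S ** D) = 0"
  shows "D = 0"
proof -
  have "D$i$j = 0" for i j
  proof (cases "i = j")
    case True
    then show ?thesis using Qn_diag[OF DQ two] by simp
  next
    case False
    obtain Y :: "'a^'n^'n" where Y: "Y \<in> Qn" "det Y \<noteq> 0" using inv_skew_exists[OF ev] by blast
    obtain c where c: "c \<noteq> 0" "det (Y + mat_smult c (Eij i j)) \<noteq> 0"
      using perturb_exists[OF fsz nN Y(2)] by blast
    have S2: "Y + mat_smult c (Eij i j) \<in> Qn" using Y(1) Eij_Qn[OF False] by (intro Qn_add Qn_smult)
    have "0 = trace ((Y + mat_smult c (Eij i j)) ** D)" using H[OF S2 c(2)] by simp
    also have "\<dots> = trace (Y ** D) + c * trace (Eij i j ** D)"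
      by (simp add: mmul_add_r mmul_smult_l trace_add trace_smult)
    also have "trace (Eij i j ** D) = D$j$i - D$i$j"
      using trace_mul_sym[of "Eij i j" D] trace_Eij[OF False, of D] by simp
    also have "D$j$i = - D$i$j" using QnD[OF DQ] .
    finally have "0 = c * (- D$i$j - D$i$j)" using H[OF Y] by simp
    then have "- D$i$j - D$i$j = 0" using c(1) by simp
    then have "2 * D$i$j = 0" by (metis add.inverse_distrib_swap diff_conv_add_uminus mult_2 neg_equal_0_iff_equal)
    then show ?thesis using two by (metis no_zero_divisors)
  qed
  then show ?thesis by (simp add: vec_eq_iff)
qed

lemma Lin_test_zero:
  fixes D :: "'a::field^'n^'n"
  assumes ev: "even CARD('n)" and two: "(2::'a) \<noteq> 0"
    and fsz: "infinite (UNIV::'a set) \<or> card (UNIV::'a set) \<ge> N + 1"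
    and nN: "CARD('n) + 1 \<le> N" and DQ: "D \<in> Qn"
    and H: "\<And>B. B \<in> Qn \<Longrightarrow> det B \<noteq> 0 \<Longrightarrow> Lin D B = 0"
  shows "D = 0"
proof (rule trace_test_zero[OF ev two fsz nN DQ])
  fix S :: "'a^'n^'n" assume S: "S \<in> Qn" "det S \<noteq> 0"
  obtain Si where Si: "S ** Si = mat 1" "Si ** S = mat 1" using inv_exists[OF S(2)] by blast
  have SiQ: "Si \<in> Qn" using inv_skew[OF S(1) Si] .
  have "det S * det Si = 1" using Si(1) by (metis det_I det_mul)
  then have dSi: "det Si \<noteq> 0" by auto
  have "Lin D Si = det Si * trace (S ** D)" using Lin_inv[OF Si(2)] .
  then show "trace (S ** D) = 0" using H[OF SiQ dSi] dSi by simp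
qed

lemma det_eq_imp_eq:
  fixes A A' :: "'a::field^'n^'n"
  assumes ev: "even CARD('n)" and two: "(2::'a) \<noteq> 0"
    and fsz: "infinite (UNIV::'a set) \<or> card (UNIV::'a set) \<ge> N + 1"
    and nN: "CARD('n) + 1 \<le> N" and AQ: "A \<in> Qn" "A' \<in> Qn"
    and H: "\<And>z. z \<in> Qn \<Longrightarrow> det (A + z) = det (A' + z)"
  shows "A = A'"
proof -
  have "A - A' = 0"
  proof (rule Lin_test_zero[OF ev two fsz nN Qn_diff[OF AQ]])
    fix B :: "'a^'n^'n" assume B: "B \<in> Qn" "det B \<noteq> 0"
    have val: "poly (det (PM (A - A') B)) \<mu> = poly [:det B:] \<mu>" for \<mu>
    proof (cases "\<mu> = 0")
      case True
      then show ?thesis by (simp add: poly_det_PM mat_smult_0)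
    next
      case False
      let ?z = "mat_smult (1/\<mu>) B - A'"
      have zQ: "?z \<in> Qn" using B(1) AQ(2) by (intro Qn_diff Qn_smult)
      have eq: "B + mat_smult \<mu> (A - A') = mat_smult \<mu> (A + ?z)"
        using False by (simp add: mat_smult_def vec_eq_iff field_simps)
      have "A' + ?z = mat_smult (1/\<mu>) B" by simp
      then have "det (A + ?z) = (1/\<mu>) ^ CARD('n) * det B" using H[OF zQ] by (simp add: det_smult)
      then have "det (B + mat_smult \<mu> (A - A')) = \<mu> ^ CARD('n) * ((1/\<mu>) ^ CARD('n) * det B)"
        unfolding eq det_smult by simp
      also have "\<dots> = det B" using False by (simp add: power_one_over field_simps)
      finally show ?thesis by (simp add: poly_det_PM)
    qed
    have "det (PM (A - A') B) = [:det B:]"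
      by (rule poly_eq_big[OF fsz _ _ val]) (use degree_det_PM[of "A - A'" B] nN in auto)
    then show "Lin (A - A') B = 0" using coeff_det_PM1[of "A - A'" B] by simp
  qed
  then show ?thesis by simp
qed


lemma lagrange_coeff1:
  fixes T :: "'a::field set"
  assumes fT: "finite T" and cT: "card T = m + 1"
  shows "\<exists>\<gamma>. \<forall>p. degree p \<le> m \<longrightarrow> coeff p 1 = (\<Sum>s\<in>T. \<gamma> s * poly p s)"
proof -
  define L where "L s = smult (inverse (\<Prod>t\<in>T-{s}. (s - t))) (\<Prod>t\<in>T-{s}. [:-t, 1:])" for s
  have L1: "poly (L s) s = 1" if "s \<in> T" for s
  proof -
    have "(\<Prod>t\<in>T-{s}. (s - t)) \<noteq> 0" using fT by (auto simp: prod_zero_iff)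
    then show ?thesis by (simp add: L_def poly_prod)
  qed
  have L0: "poly (L s) t = 0" if "s \<in> T" "t \<in> T" "t \<noteq> s" for s t
  proof -
    have "(\<Prod>u\<in>T-{s}. poly [:-u, 1:] t) = 0"
      using that fT by (intro prod_zero) (auto intro!: bexI[of _ t])
    then show ?thesis by (simp add: L_def poly_prod)
  qed
  have Ldeg: "degree (L s) \<le> m" if "s \<in> T" for s
  proof -
    have "degree (\<Prod>t\<in>T-{s}. [:-t, 1:]) \<le> (\<Sum>t\<in>T-{s}. degree [:-t, (1::'a):])"
      using degree_prod_sum_le[of "T-{s}" "\<lambda>t. [:-t, 1:]"] fT by (simp add: o_def)
    also have "\<dots> = card (T - {s})" by simp
    also have "\<dots> = m" using that cT fT by simp
    finally show ?thesis by (simp add: L_def)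
  qed
  show ?thesis
  proof (intro exI allI impI)
    fix p :: "'a poly" assume dp: "degree p \<le> m"
    define q where "q = (\<Sum>s\<in>T. smult (poly p s) (L s))"
    have dq: "degree q \<le> m" unfolding q_def
      by (rule degree_sum_le) (use Ldeg fT in \<open>auto intro: order.trans[OF degree_smult_le]\<close>)
    have pq: "poly q t = poly p t" if "t \<in> T" for t
    proof -
      have "poly q t = (\<Sum>s\<in>T. poly p s * poly (L s) t)" by (simp add: q_def poly_sum)
      also have "\<dots> = (\<Sum>s\<in>T. if s = t then poly p t else 0)"
        by (rule sum.cong[OF refl]) (use L0 L1 that in auto)
      also have "\<dots> = poly p t" using that fT by simp
      finally show ?thesis .
    qed
    have "p = q"
    proof (rule ccontr)
      assume "p \<noteq> q"
      then have ne: "p - q \<noteq> 0" by simp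
      have "T \<subseteq> {x. poly (p - q) x = 0}" using pq by auto
      moreover have "finite {x. poly (p - q) x = 0}" using ne by (rule poly_roots_finite)
      ultimately have "card T \<le> card {x. poly (p - q) x = 0}" by (rule card_mono[rotated])
      also have "\<dots> \<le> degree (p - q)" using ne by (rule card_poly_roots_bound)
      also have "\<dots> \<le> m" using dp dq degree_diff_le by blast
      finally show False using cT by simp
    qed
    then have "coeff p 1 = coeff q 1" by simp
    also have "\<dots> = (\<Sum>s\<in>T. coeff (L s) 1 * poly p s)"
      unfolding q_def coeff_sum by (simp add: ac_simps)
    finally show "coeff p 1 = (\<Sum>s\<in>T. coeff (L s) 1 * poly p s)" .
  qed
qed

lemma Lin_combo:
  fixes T :: "'a::field set"
  assumes fT: "finite T" and cT: "card T = CARD('n) + 1"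
  shows "\<exists>\<gamma>. \<forall>W B :: 'a^'n^'n. Lin W B = (\<Sum>s\<in>T. \<gamma> s * det (B + mat_smult s W))"
proof -
  obtain \<gamma> where g: "\<And>p. degree p \<le> CARD('n) \<Longrightarrow> coeff p 1 = (\<Sum>s\<in>T. \<gamma> s * poly p s)"
    using lagrange_coeff1[OF fT cT] by blast
  show ?thesis
  proof (intro exI allI)
    fix W B :: "'a^'n^'n"
    have "Lin W B = coeff (det (PM W B)) 1" by (rule coeff_det_PM1[symmetric])
    also have "\<dots> = (\<Sum>s\<in>T. \<gamma> s * det (B + mat_smult s W))"
      using g[OF degree_det_PM[of W B]] by (simp add: poly_det_PM)
    finally show "Lin W B = (\<Sum>s\<in>T. \<gamma> s * det (B + mat_smult s W))" .
  qed
qed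


lemma nonzero_set_exists:
  assumes fsz: "infinite (UNIV::'a::field set) \<or> card (UNIV::'a set) \<ge> N + 1"
    and mN: "m \<le> N"
  shows "\<exists>T::'a set. finite T \<and> card T = m \<and> 0 \<notin> T"
proof (cases "finite (UNIV::'a set)")
  case False
  then have "\<not> finite (UNIV - {0::'a})" by simp
  from infinite_arbitrarily_large[OF this, of m] show ?thesis by blast
next
  case True
  then have "card (UNIV - {0::'a}) = card (UNIV::'a set) - 1" by (simp add: card_Diff_singleton)
  also have "\<dots> \<ge> m" using fsz True mN by auto
  finally obtain T where "T \<subseteq> UNIV - {0::'a}" "card T = m" "finite T"
    by (rule obtain_subset_with_card_n)
  then show ?thesis by blast
qed

lemma trace_combo:
  fixes S :: "'a::field^'n^'n" and T :: "'a set"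
  assumes SQ: "S \<in> Qn" and dS: "det S \<noteq> 0" and T0: "0 \<notin> T"
    and g: "\<And>W B :: 'a^'n^'n. Lin W B = (\<Sum>s\<in>T. \<gamma> s * det (B + mat_smult s W))"
  shows "\<exists>Si. Si \<in> Qn \<and> det Si \<noteq> 0 \<and> (\<forall>W. trace (S ** W) =
           (\<Sum>s\<in>T. (\<gamma> s * s ^ CARD('n) / det Si) * det (mat_smult (1/s) Si + W)))"
proof -
  obtain Si where Si: "S ** Si = mat 1" "Si ** S = mat 1" using inv_exists[OF dS] by blast
  have SiQ: "Si \<in> Qn" using inv_skew[OF SQ Si] .
  have "det S * det Si = 1" using Si(1) by (metis det_I det_mul)
  then have dSi: "det Si \<noteq> 0" by auto
  have "trace (S ** W) = (\<Sum>s\<in>T. (\<gamma> s * s ^ CARD('n) / det Si) * det (mat_smult (1/s) Si + W))" for W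
  proof -
    have "Lin W Si = det Si * trace (S ** W)" using Lin_inv[OF Si(2)] .
    then have "trace (S ** W) = Lin W Si / det Si" using dSi by simp
    also have "\<dots> = (\<Sum>s\<in>T. \<gamma> s * det (Si + mat_smult s W)) / det Si" by (simp add: g)
    also have "\<dots> = (\<Sum>s\<in>T. (\<gamma> s * s ^ CARD('n) / det Si) * det (mat_smult (1/s) Si + W))"
      unfolding sum_divide_distrib
    proof (rule sum.cong[OF refl])
      fix s assume "s \<in> T"
      then have s0: "s \<noteq> 0" using T0 by auto
      have "Si + mat_smult s W = mat_smult s (mat_smult (1/s) Si + W)"
        using s0 by (simp add: mat_smult_def vec_eq_iff field_simps)
      then have "det (Si + mat_smult s W) = s ^ CARD('n) * det (mat_smult (1/s) Si + W)"
        by (simp add: det_smult)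
      then show "\<gamma> s * det (Si + mat_smult s W) / det Si =
          \<gamma> s * s ^ CARD('n) / det Si * det (mat_smult (1 / s) Si + W)" by simp
    qed
    finally show ?thesis .
  qed
  then show ?thesis using SiQ dSi by blast
qed

lemma entry_combo:
  fixes i j :: "'n::finite"
  assumes ev: "even CARD('n)" and two: "(2::'a::field) \<noteq> 0"
    and fsz: "infinite (UNIV::'a set) \<or> card (UNIV::'a set) \<ge> N + 1"
    and nN: "CARD('n) + 2 \<le> N"
  shows "\<exists>(K::('a \<times> bool) set) (cf::'a \<times> bool \<Rightarrow> 'a) (xf::'a \<times> bool \<Rightarrow> 'a^'n^'n).
     finite K \<and> (\<forall>k\<in>K. xf k \<in> Qn) \<and> (\<forall>W\<in>Qn. W$i$j = (\<Sum>k\<in>K. cf k * det (xf k + W)))"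
proof (cases "i = j")
  case True
  show ?thesis
    by (rule exI[of _ "{}"]) (use Qn_diag[OF _ two] True in auto)
next
  case False
  have nN1: "CARD('n) + 1 \<le> N" using nN by simp
  obtain Y :: "'a^'n^'n" where Y: "Y \<in> Qn" "det Y \<noteq> 0" using inv_skew_exists[OF ev] by blast
  obtain c where c: "c \<noteq> 0" "det (Y + mat_smult c (Eij i j)) \<noteq> 0"
    using perturb_exists[OF fsz nN1 Y(2)] by blast
  have S1Q: "Y + mat_smult c (Eij i j) \<in> Qn" using Y(1) Eij_Qn[OF False] by (intro Qn_add Qn_smult)
  obtain T :: "'a set" where T: "finite T" "card T = CARD('n) + 1" "0 \<notin> T"
    using nonzero_set_exists[OF fsz, of "CARD('n) + 1"] nN by auto
  obtain \<gamma> where g: "\<And>W B :: 'a^'n^'n. Lin W B = (\<Sum>s\<in>T. \<gamma> s * det (B + mat_smult s W))"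
    using Lin_combo[OF T(1), where 'n='n] T(2) by blast
  obtain S1i where S1i: "S1i \<in> Qn" "det S1i \<noteq> 0" "\<And>W. trace ((Y + mat_smult c (Eij i j)) ** W) =
           (\<Sum>s\<in>T. (\<gamma> s * s ^ CARD('n) / det S1i) * det (mat_smult (1/s) S1i + W))"
    using trace_combo[OF S1Q c(2) T(3) g] by blast
  obtain S2i where S2i: "S2i \<in> Qn" "det S2i \<noteq> 0" "\<And>W. trace (Y ** W) =
           (\<Sum>s\<in>T. (\<gamma> s * s ^ CARD('n) / det S2i) * det (mat_smult (1/s) S2i + W))"
    using trace_combo[OF Y(1) Y(2) T(3) g] by blast
  define cf where "cf k = (if snd k then \<gamma> (fst k) * fst k ^ CARD('n) / det S2i / (2 * c)
      else - (\<gamma> (fst k) * fst k ^ CARD('n) / det S1i / (2 * c)))" for k :: "'a \<times> bool"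
  define xf where "xf k = mat_smult (1 / fst k) (if snd k then S2i else S1i)" for k :: "'a \<times> bool"
  show ?thesis
  proof (intro exI conjI ballI)
    show "finite (T \<times> (UNIV::bool set))" using T(1) by simp
    show "xf k \<in> Qn" if "k \<in> T \<times> UNIV" for k unfolding xf_def using S1i(1) S2i(1) by (simp add: Qn_smult)
    fix W :: "'a^'n^'n" assume WQ: "W \<in> Qn"
    have "trace ((Y + mat_smult c (Eij i j)) ** W) = trace (Y ** W) + c * trace (Eij i j ** W)"
      by (simp add: mmul_add_r mmul_smult_l trace_add trace_smult)
    also have "trace (Eij i j ** W) = W$j$i - W$i$j"
      using trace_mul_sym[of "Eij i j" W] trace_Eij[OF False, of W] by simp
    also have "W$j$i = - W$i$j" using QnD[OF WQ] .
    finally have tr: "trace ((Y + mat_smult c (Eij i j)) ** W) = trace (Y ** W) - 2 * c * W$i$j"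
      by (simp add: algebra_simps)
    have "W$i$j = (trace (Y ** W) - trace ((Y + mat_smult c (Eij i j)) ** W)) / (2 * c)"
      using tr two c(1) by (simp add: field_simps)
    also have "\<dots> = (\<Sum>s\<in>T. cf (s, True) * det (xf (s, True) + W) + cf (s, False) * det (xf (s, False) + W))"
      unfolding S1i(3) S2i(3) sum_subtractf[symmetric] sum_divide_distrib
    proof (rule sum.cong[OF refl])
      fix s assume "s \<in> T"
      show "(\<gamma> s * s ^ CARD('n) / det S2i * det (mat_smult (1 / s) S2i + W) -
          \<gamma> s * s ^ CARD('n) / det S1i * det (mat_smult (1 / s) S1i + W)) / (2 * c) =
          cf (s, True) * det (xf (s, True) + W) + cf (s, False) * det (xf (s, False) + W)"
        unfolding cf_def xf_def using S1i(2) S2i(2) c(1) two by (simp add: field_simps)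
    qed
    also have "\<dots> = (\<Sum>s\<in>T. \<Sum>b\<in>UNIV. cf (s, b) * det (xf (s, b) + W))"
      by (simp add: UNIV_bool add.commute)
    also have "\<dots> = (\<Sum>k\<in>T \<times> UNIV. cf k * det (xf k + W))"
      by (subst sum.cartesian_product) (simp add: split_def)
    finally show "W$i$j = (\<Sum>k\<in>T \<times> UNIV. cf k * det (xf k + W))" .
  qed
qed


lemma pCons0_monom: "pCons 0 (q::'a::comm_ring_1 poly) = monom 1 1 * q"
  by (rule poly_eqI) (simp add: coeff_monom_mult coeff_pCons split: nat.splits)

lemma monom1_power: "(monom (1::'a::comm_ring_1) (Suc 0)) ^ k = monom 1 k"
  by (induction k) (simp_all add: mult_monom)

lemma Lin_shift:
  fixes A N :: "'a::comm_ring_1 poly^'n^'n"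
  shows "Lin A (\<chi> i j. monom 1 1 * N$i$j) = monom 1 (CARD('n) - 1) * Lin A N"
proof -
  have "(\<Prod>k\<in>UNIV-{i}. monom 1 1 * N$k$p k) = monom 1 (CARD('n) - 1) * (\<Prod>k\<in>UNIV-{i}. N$k$p k)"
    for i :: 'n and p
    by (simp add: prod.distrib monom1_power card_Diff_singleton)
  then show ?thesis
    by (simp add: Lin_def sum_distrib_left ac_simps)
qed

lemma det_shift:
  fixes N :: "'a::comm_ring_1 poly^'n^'n"
  shows "det (\<chi> i j. monom 1 1 * N$i$j) = monom 1 CARD('n) * det N"
proof -
  have "(\<Prod>k\<in>UNIV. monom 1 1 * N$k$p k) = monom 1 CARD('n) * (\<Prod>k\<in>UNIV. N$k$p k)"
    for p :: "'n \<Rightarrow> 'n"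
    by (simp add: prod.distrib monom1_power)
  then show ?thesis
    by (simp add: det_def sum_distrib_left ac_simps)
qed

lemma coeff_poly_const:
  fixes P :: "'a::comm_ring_1 poly poly"
  shows "coeff (poly P [:\<mu>:]) j = poly (map_poly (\<lambda>r. coeff r j) P) \<mu>"
proof (induction P)
  case (pCons a P)
  then show ?case by (simp add: map_poly_pCons)
qed simp

lemma evm_PM: "evm (PM A B) x = (\<chi> i j. B$i$j + x * A$i$j)"
  by (simp add: evm_def PM_def)

lemma evm_constm: "evm (constm M) x = M"
  by (simp add: evm_def constm_def vec_eq_iff)

lemma poly_eq_big_nz:
  fixes p q :: "'a::field poly"
  assumes "infinite (UNIV::'a set) \<or> card (UNIV::'a set) \<ge> N + 1"
    "degree p \<le> D" "degree q \<le> D" "D + 1 \<le> N" "\<And>x. x \<noteq> 0 \<Longrightarrow> poly p x = poly q x"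
  shows "p = q"
proof (rule ccontr)
  assume ne: "p \<noteq> q"
  let ?K = "{x. poly (p - q) x = 0}"
  have fK: "finite ?K" using ne by (intro poly_roots_finite) simp
  have cK: "card ?K \<le> D"
  proof -
    have "card ?K \<le> degree (p - q)" using ne by (intro card_poly_roots_bound) simp
    also have "\<dots> \<le> D" using assms(2,3) degree_diff_le by blast
    finally show ?thesis .
  qed
  have sub: "UNIV - {0} \<subseteq> ?K" using assms(5) by auto
  then have "finite (UNIV - {0::'a})" using fK finite_subset by blast
  then have fU: "finite (UNIV::'a set)" by simp
  have "card (UNIV - {0::'a}) \<le> card ?K" using sub fK by (rule card_mono[rotated])
  moreover have "card (UNIV - {0::'a}) = card (UNIV::'a set) - 1" by (simp add: card_Diff_singleton)
  ultimately show False using assms(1,4) fU cK by linarith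
qed

lemma mat_smult_add_l: "mat_smult (a + b) w = mat_smult a w + mat_smult b w"
  by (simp add: mat_smult_def vec_eq_iff algebra_simps)
lemma mat_smult_add_r: "mat_smult a (v + w) = mat_smult a v + mat_smult a w"
  by (simp add: mat_smult_def vec_eq_iff algebra_simps)
lemma mat_smult_diff_r: "mat_smult a (v - w) = mat_smult a v - mat_smult a w"
  by (simp add: mat_smult_def vec_eq_iff algebra_simps)
lemma mat_smult_neg_r: "mat_smult a (- w) = - mat_smult a w"
  by (simp add: mat_smult_def vec_eq_iff algebra_simps)
lemma mat_smult_neg_l: "mat_smult (- a) w = - mat_smult a w"
  by (simp add: mat_smult_def vec_eq_iff algebra_simps)
lemma mat_smult_assoc: "mat_smult a (mat_smult b w) = mat_smult (a * b) w"
  by (simp add: mat_smult_def vec_eq_iff algebra_simps)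
lemma mat_smult_1: "mat_smult 1 w = w"
  by (simp add: mat_smult_def vec_eq_iff)
lemma mat_smult_zero_r: "mat_smult a 0 = 0"
  by (simp add: mat_smult_def vec_eq_iff)
lemma mat_smult_nth: "mat_smult a w $ i $ j = a * w $ i $ j"
  by (simp add: mat_smult_def)


lemma Lin_eq_imp_eq:
  fixes M1 M2 :: "'a::field^'n^'n"
  assumes ev: "even CARD('n)" and two: "(2::'a) \<noteq> 0"
    and fsz: "infinite (UNIV::'a set) \<or> card (UNIV::'a set) \<ge> N + 1"
    and nN: "CARD('n) + 1 \<le> N" and MQ: "M1 \<in> Qn" "M2 \<in> Qn"
    and dM: "det M1 = det M2" "det M1 \<noteq> 0"
    and H: "\<And>X. X \<in> Qn \<Longrightarrow> Lin X M1 = Lin X M2"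
  shows "M1 = M2"
proof -
  obtain M1i :: "'a^'n^'n" where M1i: "M1 ** M1i = mat 1" "M1i ** M1 = mat 1" using inv_exists[OF dM(2)] by blast
  have dM2: "det M2 \<noteq> 0" using dM by simp
  obtain M2i :: "'a^'n^'n" where M2i: "M2 ** M2i = mat 1" "M2i ** M2 = mat 1" using inv_exists[OF dM2] by blast
  have Q1: "M1i \<in> Qn" using inv_skew[OF MQ(1) M1i] .
  have Q2: "M2i \<in> Qn" using inv_skew[OF MQ(2) M2i] .
  have "M1i - M2i = 0"
  proof (rule trace_test_zero[OF ev two fsz nN Qn_diff[OF Q1 Q2]])
    fix S :: "'a^'n^'n" assume S: "S \<in> Qn" "det S \<noteq> 0"
    have "det M1 * trace (M1i ** S) = det M2 * trace (M2i ** S)"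
      using H[OF S(1)] Lin_inv[OF M1i(1), of S] Lin_inv[OF M2i(1), of S] by simp
    then have "trace (M1i ** S) = trace (M2i ** S)" using dM by simp
    moreover have "(M1i - M2i) ** S = M1i ** S - M2i ** S"
      by (simp add: matrix_matrix_mult_def vec_eq_iff sum_subtractf algebra_simps)
    ultimately have "trace ((M1i - M2i) ** S) = 0"
      by (simp add: trace_sub)
    then show "trace (S ** (M1i - M2i)) = 0" using trace_mul_sym[of S "M1i - M2i"] by simp
  qed
  then have e: "M1i = M2i" by simp
  have "M1 = M1 ** (M2i ** M2)" using M2i(2) by simp
  also have "\<dots> = (M1 ** M2i) ** M2" by (rule matrix_mul_assoc)
  also have "\<dots> = M2" using M1i(1) e by simp
  finally show ?thesis .
qed

locale setting =
  fixes \<phi> \<psi> :: "'a::field^'n^'n \<Rightarrow> 'a^'n^'n"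
  assumes n_even: "even CARD('n)"
    and char_not_2: "(2::'a) \<noteq> 0"
    and field_size: "infinite (UNIV :: 'a set) \<or> card (UNIV :: 'a set) \<ge> CARD('n)^2 + 1"
    and phi_maps: "\<forall>x\<in>Qn. \<phi> x \<in> Qn"
    and psi_maps: "\<forall>x\<in>Qn. \<psi> x \<in> Qn"
    and psi_surj: "\<psi> ` Qn = Qn"
    and psi_zero: "\<psi> 0 = 0"
    and det_pres: "\<forall>x\<in>Qn. \<forall>y\<in>Qn. det (\<phi> x + \<psi> y) = det (x + y)"
begin


lemma n_ge2: "2 \<le> CARD('n)"
proof -
  have "0 < CARD('n)" by simp
  then show ?thesis using n_even by presburger
qed

lemma nN2: "CARD('n) + 2 \<le> CARD('n)^2"
proof -
  have "CARD('n) * 2 \<le> CARD('n) * CARD('n)" using n_ge2 by simp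
  then show ?thesis using n_ge2 unfolding power2_eq_square by linarith
qed

lemma nN1: "CARD('n) + 1 \<le> CARD('n)^2"
  using nN2 by simp

lemma nN3: "2 * CARD('n) \<le> CARD('n)^2"
  using n_ge2 unfolding power2_eq_square by (metis mult.commute mult_le_mono1)

lemmas fsz = field_size

lemma psi_inj: "inj_on \<psi> Qn"
proof (rule inj_onI)
  fix y y' :: "'a^'n^'n" assume y: "y \<in> Qn" "y' \<in> Qn" "\<psi> y = \<psi> y'"
  show "y = y'"
  proof (rule det_eq_imp_eq[OF n_even char_not_2 fsz nN1 y(1) y(2)])
    fix z :: "'a^'n^'n" assume z: "z \<in> Qn"
    have "det (\<phi> z + \<psi> y) = det (z + y)" using det_pres z y(1) by blast
    moreover have "det (\<phi> z + \<psi> y') = det (z + y')" using det_pres z y(2) by blast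
    ultimately have "det (z + y) = det (z + y')" using y(3) by simp
    then show "det (y + z) = det (y' + z)" by (simp add: add.commute)
  qed
qed

definition g where "g z = inv_into Qn \<psi> z"

lemma g_Qn: "z \<in> Qn \<Longrightarrow> g z \<in> Qn"
  unfolding g_def using psi_surj by (metis inv_into_into)

lemma psi_g: "z \<in> Qn \<Longrightarrow> \<psi> (g z) = z"
  unfolding g_def using psi_surj by (metis f_inv_into_f)

lemma g_psi: "y \<in> Qn \<Longrightarrow> g (\<psi> y) = y"
  unfolding g_def using psi_inj by (simp add: inv_into_f_f)

lemma g0: "g 0 = 0"
  using g_psi[OF Qn_zero] psi_zero by simp

lemma S2: "x \<in> Qn \<Longrightarrow> z \<in> Qn \<Longrightarrow> det (\<phi> x + z) = det (x + g z)"
proof -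
  assume x: "x \<in> Qn" and z: "z \<in> Qn"
  have "det (\<phi> x + \<psi> (g z)) = det (x + g z)" using det_pres x g_Qn[OF z] by blast
  then show ?thesis using psi_g[OF z] by simp
qed

lemma line_Qn: "u \<in> Qn \<Longrightarrow> w \<in> Qn \<Longrightarrow> u + mat_smult l w \<in> Qn"
  by (intro Qn_add Qn_smult)

lemma S3:
  assumes u: "u \<in> Qn" and w: "w \<in> Qn"
  shows "\<exists>p. degree p \<le> CARD('n) \<and> (\<forall>l. poly p l = g (u + mat_smult l w) $ i $ j)"
proof -
  obtain K :: "('a \<times> bool) set" and cf :: "'a \<times> bool \<Rightarrow> 'a" and xf :: "'a \<times> bool \<Rightarrow> 'a^'n^'n" where
    K: "finite K" "\<forall>k\<in>K. xf k \<in> Qn" "\<forall>W\<in>Qn. W$i$j = (\<Sum>k\<in>K. cf k * det (xf k + W))"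
    using entry_combo[OF n_even char_not_2 fsz nN2, of i j] by blast
  define p where "p = (\<Sum>k\<in>K. smult (cf k) (det (PM w (\<phi> (xf k) + u))))"
  have "degree p \<le> CARD('n)" unfolding p_def
    by (rule degree_sum_le) (use K(1) degree_det_PM in \<open>auto intro: order.trans[OF degree_smult_le]\<close>)
  moreover have "poly p l = g (u + mat_smult l w) $ i $ j" for l
  proof -
    have zQ: "u + mat_smult l w \<in> Qn" using u w by (rule line_Qn)
    have "g (u + mat_smult l w) $ i $ j = (\<Sum>k\<in>K. cf k * det (xf k + g (u + mat_smult l w)))"
      using K(3) g_Qn[OF zQ] by blast
    also have "\<dots> = (\<Sum>k\<in>K. cf k * det (\<phi> (xf k) + (u + mat_smult l w)))"
      by (rule sum.cong[OF refl]) (use S2 K(2) zQ in auto)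
    also have "\<dots> = poly p l"
      by (simp add: p_def poly_sum poly_det_PM add.assoc)
    finally show ?thesis by simp
  qed
  ultimately show ?thesis by blast
qed

end


lemma coeff0_shift: "coeff (p::'a::comm_ring_1 poly) 0 = 0 \<Longrightarrow> \<exists>q. p = monom 1 1 * q"
  by (cases p) (auto simp: pCons0_monom)

context setting
begin

lemma S4:
  assumes u: "u \<in> Qn" and w: "w \<in> Qn" and dw: "det w \<noteq> 0"
  shows "g (u + mat_smult l w) = g u + mat_smult l (g (u + w) - g u)"
proof -
  define G :: "'a poly^'n^'n" where
    "G = (\<chi> i j. SOME p. degree p \<le> CARD('n) \<and> (\<forall>l. poly p l = g (u + mat_smult l w) $ i $ j))"
  have Gp: "degree (G$i$j) \<le> CARD('n) \<and> (\<forall>l. poly (G$i$j) l = g (u + mat_smult l w) $ i $ j)" for i j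
    unfolding G_def using someI_ex[OF S3[OF u w, of i j]] by simp
  define C where "C = g u"
  have CQ: "C \<in> Qn" unfolding C_def using g_Qn[OF u] .
  define H :: "'a poly^'n^'n" where "H = (\<chi> i j. G$i$j - [:C$i$j:])"
  have Hdeg: "degree (H$i$j) \<le> CARD('n)" for i j
    unfolding H_def using Gp[of i j] degree_diff_le[of "G$i$j" "CARD('n)" "[:C$i$j:]"] by simp
  have Hval: "poly (H$i$j) l = g (u + mat_smult l w) $ i $ j - C$i$j" for i j l
    unfolding H_def using Gp[of i j] by simp
  have H0: "coeff (H$i$j) 0 = 0" for i j
    using Hval[of i j 0] by (simp add: poly_0_coeff_0 mat_smult_0 C_def)
  define Nm :: "'a poly^'n^'n" where "Nm = (\<chi> i j. SOME q. H$i$j = monom 1 1 * q)"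
  have HN: "H = (\<chi> i j. monom 1 1 * Nm$i$j)"
  proof -
    have "H$i$j = monom 1 1 * Nm$i$j" for i j
      unfolding Nm_def using someI_ex[OF coeff0_shift[OF H0[of i j]]] by simp
    then show ?thesis by (simp add: vec_eq_iff)
  qed
  have KC: "det (constm y + H) = det (PM w (\<phi> (y - C) + u))" if yQ: "y \<in> Qn" for y
  proof (rule poly_eq_big[OF fsz])
    have "degree (det (constm y + H)) \<le> CARD('n) * CARD('n)"
    proof (rule degree_det_le)
      fix i j
      have "degree ([:y$i$j:] + H$i$j) \<le> CARD('n)"
        by (rule degree_add_le) (use Hdeg[of i j] in auto)
      then show "degree ((constm y + H)$i$j) \<le> CARD('n)" by (simp add: constm_def)
    qed
    then show "degree (det (constm y + H)) \<le> CARD('n)^2" by (simp add: power2_eq_square)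
    show "degree (det (PM w (\<phi> (y - C) + u))) \<le> CARD('n)^2"
      using degree_det_PM[of w "\<phi> (y - C) + u"] nN1 by linarith
    fix l
    have yC: "y - C \<in> Qn" using yQ CQ by (rule Qn_diff)
    have zQ: "u + mat_smult l w \<in> Qn" using u w by (rule line_Qn)
    have "evm (constm y + H) l = (y - C) + g (u + mat_smult l w)"
      by (simp add: evm_def constm_def vec_eq_iff Hval)
    then have "poly (det (constm y + H)) l = det ((y - C) + g (u + mat_smult l w))"
      by (simp add: poly_det)
    also have "\<dots> = det (\<phi> (y - C) + (u + mat_smult l w))" using S2[OF yC zQ] by simp
    also have "\<dots> = poly (det (PM w (\<phi> (y - C) + u))) l" by (simp add: poly_det_PM add.assoc)
    finally show "poly (det (constm y + H)) l = poly (det (PM w (\<phi> (y - C) + u))) l" .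
  qed
  have KCdeg: "degree (det (constm y + H)) \<le> CARD('n)" if "y \<in> Qn" for y
    using KC[OF that] degree_det_PM by metis
  have KCn: "coeff (det (constm y + H)) CARD('n) = det w" if "y \<in> Qn" for y
    using KC[OF that] coeff_det_PMn by metis
  have c0: "constm (0::'a^'n^'n) = 0" by (simp add: constm_def vec_eq_iff)
  have dH: "det H = monom 1 CARD('n) * det Nm" unfolding HN by (rule det_shift)
  have detNm: "det Nm = [:det w:]"
  proof (rule poly_eqI)
    fix k
    have "coeff (det H) (CARD('n) + k) = coeff (det Nm) k" unfolding dH by (simp add: coeff_monom_mult)
    moreover have "coeff (det H) (CARD('n) + k) = (if k = 0 then det w else 0)"
    proof (cases k)
      case 0
      then show ?thesis using KCn[OF Qn_zero] c0 by simp
    next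
      case (Suc m)
      have "degree (det H) \<le> CARD('n)" using KCdeg[OF Qn_zero] c0 by simp
      then show ?thesis using Suc by (simp add: coeff_eq_0)
    qed
    ultimately show "coeff (det Nm) k = coeff [:det w:] k" by (cases k) auto
  qed
  have detNl: "det (evm Nm l) = det w" for l
    using poly_det[of Nm l] detNm by simp
  have LinN: "Lin X (evm Nm l) = Lin X (evm Nm 0)" if XQ: "X \<in> Qn" for X l
  proof -
    define P where "P = det (PM (constm X) H)"
    have Pval: "poly P [:\<mu>:] = det (constm (mat_smult \<mu> X) + H)" for \<mu>
    proof -
      have "evm (PM (constm X) H) [:\<mu>:] = constm (mat_smult \<mu> X) + H"
        by (simp add: evm_PM constm_def mat_smult_def vec_eq_iff add.commute)
      then show ?thesis by (simp add: P_def poly_det)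
    qed
    have Pdeg: "degree P \<le> CARD('n)"
      unfolding P_def using degree_det_le[of "PM (constm X) H" 1]
      by (simp add: PM_def constm_def degree_pCons_le)
    have cz: "coeff (coeff P 1) j = 0" if j: "j \<ge> CARD('n)" for j
    proof -
      define Q where "Q = map_poly (\<lambda>r. coeff r j) P"
      have Qval: "poly Q \<mu> = (if j = CARD('n) then det w else 0)" for \<mu>
      proof -
        have mQ: "mat_smult \<mu> X \<in> Qn" using XQ by (rule Qn_smult)
        have "poly Q \<mu> = coeff (det (constm (mat_smult \<mu> X) + H)) j"
          unfolding Q_def by (simp add: coeff_poly_const[symmetric] Pval)
        also have "\<dots> = (if j = CARD('n) then det w else 0)"
        proof (cases "j = CARD('n)")
          case True
          then show ?thesis using KCn[OF mQ] by simp
        next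
          case False
          then have "j > degree (det (constm (mat_smult \<mu> X) + H))" using KCdeg[OF mQ] j by simp
          then show ?thesis using False by (simp add: coeff_eq_0)
        qed
        finally show ?thesis .
      qed
      have "Q = [:(if j = CARD('n) then det w else 0):]"
      proof (rule poly_eq_big[OF fsz])
        show "degree Q \<le> CARD('n)^2" using map_poly_degree_leq[of "\<lambda>r. coeff r j" P] Pdeg nN1
          unfolding Q_def by linarith
      qed (use Qval in simp_all)
      then have "coeff Q 1 = 0" by simp
      then show ?thesis unfolding Q_def by (simp add: coeff_map_poly)
    qed
    define L where "L = Lin (constm X) Nm"
    have cP1: "coeff P 1 = monom 1 (CARD('n) - 1) * L"
      unfolding P_def L_def using coeff_det_PM1[of "constm X" H] Lin_shift[of "constm X" Nm] HN by simp
    have Lc: "coeff L m = 0" if "m \<ge> 1" for m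
    proof -
      define k where "k = CARD('n) - 1"
      have "coeff (coeff P 1) (m + k) = 0" using cz[of "m + k"] that n_ge2 unfolding k_def by simp
      then have "coeff (monom 1 k * L) (m + k) = 0" using cP1 unfolding k_def by simp
      then show ?thesis by (simp add: coeff_monom_mult)
    qed
    have Leq: "L = [:coeff L 0:]"
      by (rule poly_eqI) (metis Lc coeff_pCons_0 coeff_pCons_Suc coeff_0 not_gr0 One_nat_def Suc_leI
          coeff_pCons neq0_conv nat.exhaust)
    have "poly L l = coeff L 0" by (subst Leq) simp
    moreover have "poly L 0 = coeff L 0" by (subst Leq) simp
    ultimately have "poly L l = poly L 0" by simp
    moreover have "poly L t = Lin X (evm Nm t)" for t
      unfolding L_def by (simp add: poly_Lin evm_constm)
    ultimately show ?thesis by simp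
  qed
  have Nval: "evm Nm t = mat_smult (1/t) (g (u + mat_smult t w) - C)" if "t \<noteq> 0" for t
  proof -
    have "poly (H$i$j) t = t * poly (Nm$i$j) t" for i j
      unfolding HN by (simp add: poly_monom)
    then show ?thesis using that Hval by (simp add: evm_def mat_smult_def vec_eq_iff field_simps)
  qed
  have NQ: "evm Nm t \<in> Qn" if "t \<noteq> 0" for t
    unfolding Nval[OF that] using g_Qn[OF line_Qn[OF u w]] CQ by (intro Qn_smult Qn_diff)
  show ?thesis
  proof (cases "l = 0")
    case True
    then show ?thesis by (simp add: mat_smult_0)
  next
    case False
    have "evm Nm l = evm Nm 1"
    proof (rule Lin_eq_imp_eq[OF n_even char_not_2 fsz nN1 NQ[OF False] NQ[of 1]])
      show "det (evm Nm l) = det (evm Nm 1)" "det (evm Nm l) \<noteq> 0" using detNl dw by auto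
      fix X :: "'a^'n^'n" assume "X \<in> Qn"
      then show "Lin X (evm Nm l) = Lin X (evm Nm 1)" using LinN by metis
    qed simp
    then have "mat_smult (1/l) (g (u + mat_smult l w) - C) = g (u + w) - C"
      using Nval[OF False] Nval[of 1] by (simp add: mat_smult_1)
    then have "mat_smult l (mat_smult (1/l) (g (u + mat_smult l w) - C)) = mat_smult l (g (u + w) - C)"
      by simp
    then have "g (u + mat_smult l w) - C = mat_smult l (g (u + w) - C)"
      using False by (simp add: mat_smult_assoc mat_smult_1)
    then show ?thesis unfolding C_def by (simp add: algebra_simps)
  qed
qed

end

context setting
begin

lemma plane:
  assumes u: "u \<in> Qn" and w1: "w1 \<in> Qn" "det w1 \<noteq> 0" and w2: "w2 \<in> Qn" "det w2 \<noteq> 0"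
    and k: "k \<noteq> 0" "det (w1 + mat_smult k w2) \<noteq> 0"
  shows "g (u + mat_smult s w1 + mat_smult t w2) =
         g u + mat_smult s (g (u + w1) - g u) + mat_smult t (g (u + w2) - g u)"
proof -
  define F where "F s t = g (u + mat_smult s w1 + mat_smult t w2)" for s t
  have w3: "w1 + mat_smult k w2 \<in> Qn" using w1 w2 by (intro Qn_add Qn_smult)
  have A1: "F s t = F 0 t + mat_smult s (F 1 t - F 0 t)" for s t
  proof -
    have b: "u + mat_smult t w2 \<in> Qn" using u w2(1) by (rule line_Qn)
    have "g ((u + mat_smult t w2) + mat_smult s w1) = g (u + mat_smult t w2) +
        mat_smult s (g (u + mat_smult t w2 + w1) - g (u + mat_smult t w2))"
      using S4[OF b w1] by blast
    moreover have "(u + mat_smult t w2) + mat_smult s w1 = u + mat_smult s w1 + mat_smult t w2"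
      by (simp add: algebra_simps)
    moreover have "u + mat_smult t w2 + w1 = u + mat_smult 1 w1 + mat_smult t w2"
      by (simp add: algebra_simps mat_smult_1)
    moreover have "u + mat_smult t w2 = u + mat_smult 0 w1 + mat_smult t w2"
      by (simp add: mat_smult_0)
    ultimately show ?thesis unfolding F_def by metis
  qed
  have A2: "F a t = F a 0 + mat_smult t (F a 1 - F a 0)" for a t
  proof -
    have b: "u + mat_smult a w1 \<in> Qn" using u w1(1) by (rule line_Qn)
    have "g ((u + mat_smult a w1) + mat_smult t w2) = g (u + mat_smult a w1) +
        mat_smult t (g (u + mat_smult a w1 + w2) - g (u + mat_smult a w1))"
      using S4[OF b w2] by blast
    moreover have "u + mat_smult a w1 + w2 = u + mat_smult a w1 + mat_smult 1 w2"
      by (simp add: mat_smult_1)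
    moreover have "u + mat_smult a w1 = u + mat_smult a w1 + mat_smult 0 w2"
      by (simp add: mat_smult_0)
    ultimately show ?thesis unfolding F_def by metis
  qed
  have A4: "F (-1) (-k) = F 0 0 - (F 1 k - F 0 0)"
  proof -
    have "g (u + mat_smult (-1) (w1 + mat_smult k w2)) = g u +
        mat_smult (-1) (g (u + (w1 + mat_smult k w2)) - g u)"
      using S4[OF u w3 k(2)] by blast
    moreover have "u + mat_smult (-1) (w1 + mat_smult k w2) = u + mat_smult (-1) w1 + mat_smult (-k) w2"
      by (simp add: mat_smult_def vec_eq_iff algebra_simps)
    moreover have "u + (w1 + mat_smult k w2) = u + mat_smult 1 w1 + mat_smult k w2"
      by (simp add: mat_smult_1 algebra_simps)
    moreover have "u = u + mat_smult 0 w1 + mat_smult 0 w2"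
      by (simp add: mat_smult_0)
    ultimately have "F (-1) (-k) = F 0 0 + mat_smult (-1) (F 1 k - F 0 0)" unfolding F_def by metis
    then show ?thesis by (simp add: mat_smult_def vec_eq_iff)
  qed
  have "F s t = F 0 0 + mat_smult s (F 1 0 - F 0 0) + mat_smult t (F 0 1 - F 0 0)"
  proof -
    have "F s t $ i $ j = F 0 0 $ i $ j + s * (F 1 0 $ i $ j - F 0 0 $ i $ j) + t * (F 0 1 $ i $ j - F 0 0 $ i $ j)" for i j
    proof -
      define a where "a x y = F x y $ i $ j" for x y
      have e1: "a x y = a 0 y + x * (a 1 y - a 0 y)" for x y
        unfolding a_def using arg_cong[OF A1[of x y], of "\<lambda>M. M $ i $ j"] by (simp add: mat_smult_def)
      have e2: "a x y = a x 0 + y * (a x 1 - a x 0)" for x y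
        unfolding a_def using arg_cong[OF A2[of x y], of "\<lambda>M. M $ i $ j"] by (simp add: mat_smult_def)
      have e4: "a (-1) (-k) = a 0 0 - (a 1 k - a 0 0)"
        unfolding a_def using arg_cong[OF A4, of "\<lambda>M. M $ i $ j"] by simp
      define \<delta> where "\<delta> = a 1 1 - a 1 0 - a 0 1 + a 0 0"
      have bil: "a x y = a 0 0 + x * (a 1 0 - a 0 0) + y * (a 0 1 - a 0 0) + x * y * \<delta>" for x y
      proof -
        have "a x y = a 0 y + x * (a 1 y - a 0 y)" by (rule e1)
        also have "a 0 y = a 0 0 + y * (a 0 1 - a 0 0)" by (rule e2)
        also have "a 1 y = a 1 0 + y * (a 1 1 - a 1 0)" by (rule e2)
        finally show ?thesis unfolding \<delta>_def by (simp add: algebra_simps)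
      qed
      have "2 * k * \<delta> = 0"
        using e4 bil[of "-1" "-k"] bil[of 1 k] by (simp add: algebra_simps)
      then have "\<delta> = 0" using k(1) char_not_2 by simp
      then show ?thesis using bil[of s t] unfolding a_def by simp
    qed
    then show ?thesis by (simp add: mat_smult_def vec_eq_iff)
  qed
  moreover have "F 0 0 = g u" "F 1 0 = g (u + w1)" "F 0 1 = g (u + w2)"
    unfolding F_def by (simp_all add: mat_smult_0 mat_smult_1)
  ultimately show ?thesis unfolding F_def by simp
qed

end

lemma det_PM_nonzero:
  fixes B :: "'a::field^'n^'n"
  assumes "det B \<noteq> 0" shows "det (PM B A) \<noteq> 0"
proof
  assume "det (PM B A) = 0"
  then have "coeff (det (PM B A)) CARD('n) = 0" by simp
  then show False using coeff_det_PMn[of B A] assms by simp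
qed

context setting
begin

definition J :: "'a^'n^'n" where "J = (SOME Y. Y \<in> Qn \<and> det Y \<noteq> 0)"

lemma JQ: "J \<in> Qn" and dJ: "det J \<noteq> 0"
  using someI_ex[OF inv_skew_exists[OF n_even]] unfolding J_def by blast+

lemma dnegJ: "det (- J) \<noteq> 0"
proof -
  have "- J = mat_smult (-1) J" by (simp add: mat_smult_def vec_eq_iff)
  then show ?thesis using dJ by (simp add: det_smult)
qed

lemma good_c:
  fixes B v :: "'a^'n^'n"
  assumes "det B \<noteq> 0"
  shows "\<exists>c. c \<noteq> 0 \<and> det (v + mat_smult c B) \<noteq> 0"
proof -
  have "degree (det (PM B v)) + card {0::'a} \<le> CARD('n)^2"
    using degree_det_PM[of B v] nN1 by simp
  then obtain c where "c \<notin> {0}" "poly (det (PM B v)) c \<noteq> 0"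
    using poly_avoid[OF fsz det_PM_nonzero[OF assms]] by blast
  then show ?thesis by (auto simp: poly_det_PM)
qed

lemma plane0:
  assumes w1: "w1 \<in> Qn" "det w1 \<noteq> 0" and w2: "w2 \<in> Qn" "det w2 \<noteq> 0"
  shows "g (mat_smult s w1 + mat_smult t w2) = mat_smult s (g w1) + mat_smult t (g w2)"
proof -
  obtain k where k: "k \<noteq> 0" "det (w1 + mat_smult k w2) \<noteq> 0"
    using perturb_exists[OF fsz nN1 w1(2)] by blast
  have "g (0 + mat_smult s w1 + mat_smult t w2) =
         g 0 + mat_smult s (g (0 + w1) - g 0) + mat_smult t (g (0 + w2) - g 0)"
    by (rule plane[OF Qn_zero w1 w2 k])
  then show ?thesis by (simp add: g0)
qed

lemma gJ_smult: "g (mat_smult c J) = mat_smult c (g J)"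
  using S4[OF Qn_zero JQ dJ, of c] by (simp add: g0)

lemma shift_homog:
  assumes v: "v \<in> Qn"
  shows "g (v + mat_smult s J) = g v + mat_smult s (g J)" "g (mat_smult \<mu> v) = mat_smult \<mu> (g v)"
proof -
  obtain c where c: "c \<noteq> 0" "det (v + mat_smult c (- J)) \<noteq> 0" using good_c[OF dnegJ] by blast
  define w1 where "w1 = mat_smult c J"
  define w2 where "w2 = v + mat_smult c (- J)"
  have w1Q: "w1 \<in> Qn" "det w1 \<noteq> 0" unfolding w1_def using JQ dJ c(1) by (auto simp: Qn_smult det_smult)
  have w2Q: "w2 \<in> Qn" "det w2 \<noteq> 0" unfolding w2_def using v JQ c(2) by (auto intro: Qn_add Qn_smult Qn_neg)
  have P: "g (mat_smult s' w1 + mat_smult t' w2) = mat_smult s' (g w1) + mat_smult t' (g w2)" for s' t'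
    by (rule plane0[OF w1Q w2Q])
  have gw1: "g w1 = mat_smult c (g J)" unfolding w1_def by (rule gJ_smult)
  have vv: "v = mat_smult 1 w1 + mat_smult 1 w2"
    unfolding w1_def w2_def by (simp add: mat_smult_def vec_eq_iff)
  have gv: "g v = g w1 + g w2" using P[of 1 1] vv by (simp add: mat_smult_1)
  have "v + mat_smult s J = mat_smult (1 + s / c) w1 + mat_smult 1 w2"
    unfolding w1_def w2_def using c(1) by (simp add: mat_smult_def vec_eq_iff field_simps)
  then have "g (v + mat_smult s J) = mat_smult (1 + s / c) (g w1) + mat_smult 1 (g w2)"
    using P by simp
  also have "\<dots> = g v + mat_smult s (g J)"
    unfolding gv gw1 using c(1) by (simp add: mat_smult_def vec_eq_iff field_simps)
  finally show "g (v + mat_smult s J) = g v + mat_smult s (g J)" .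
  have "mat_smult \<mu> v = mat_smult \<mu> w1 + mat_smult \<mu> w2"
    unfolding w1_def w2_def by (simp add: mat_smult_def vec_eq_iff algebra_simps)
  then have "g (mat_smult \<mu> v) = mat_smult \<mu> (g w1) + mat_smult \<mu> (g w2)" using P by simp
  also have "\<dots> = mat_smult \<mu> (g v)" unfolding gv by (simp add: mat_smult_add_r)
  finally show "g (mat_smult \<mu> v) = mat_smult \<mu> (g v)" .
qed

lemma g_add:
  assumes a: "a \<in> Qn" and b: "b \<in> Qn"
  shows "g (a + b) = g a + g b"
proof -
  let ?p = "det (PM J a) * det (PM (- J) b)"
  have "?p \<noteq> 0" using det_PM_nonzero[OF dJ] det_PM_nonzero[OF dnegJ] by simp
  moreover have "degree ?p + card ({}::'a set) \<le> CARD('n)^2"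
  proof -
    have "degree ?p \<le> degree (det (PM J a)) + degree (det (PM (- J) b))" by (rule degree_mult_le)
    also have "\<dots> \<le> CARD('n) + CARD('n)" using degree_det_PM by (metis add_mono)
    finally show ?thesis using nN3 by simp
  qed
  ultimately obtain c where "poly ?p c \<noteq> 0" using poly_avoid[OF fsz, of ?p "{}"] by auto
  then have c: "det (a + mat_smult c J) \<noteq> 0" "det (b + mat_smult c (- J)) \<noteq> 0"
    by (auto simp: poly_det_PM)
  define w1 where "w1 = a + mat_smult c J"
  define w2 where "w2 = b + mat_smult c (- J)"
  have w1Q: "w1 \<in> Qn" "det w1 \<noteq> 0" unfolding w1_def using a JQ c(1) by (auto intro: Qn_add Qn_smult)
  have w2Q: "w2 \<in> Qn" "det w2 \<noteq> 0" unfolding w2_def using b JQ c(2) by (auto intro: Qn_add Qn_smult Qn_neg)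
  have e1: "g (mat_smult 1 w1 + mat_smult 1 w2) = mat_smult 1 (g w1) + mat_smult 1 (g w2)"
    by (rule plane0[OF w1Q w2Q])
  have e2: "mat_smult 1 w1 + mat_smult 1 w2 = a + b"
    unfolding w1_def w2_def by (simp add: mat_smult_def vec_eq_iff)
  have e3: "g w1 = g a + mat_smult c (g J)" unfolding w1_def by (rule shift_homog(1)[OF a])
  have e4: "g w2 = g b + mat_smult (- c) (g J)"
  proof -
    have "w2 = b + mat_smult (- c) J" unfolding w2_def by (simp add: mat_smult_def vec_eq_iff)
    then show ?thesis by (simp add: shift_homog(1)[OF b])
  qed
  have "g (a + b) = g w1 + g w2" using e1 e2 by (simp add: mat_smult_1)
  also have "\<dots> = (g a + mat_smult c (g J)) + (g b + mat_smult (- c) (g J))" using e3 e4 by simp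
  also have "\<dots> = g a + g b" by (simp add: mat_smult_def vec_eq_iff)
  finally show ?thesis .
qed

lemma psi_add: "x \<in> Qn \<Longrightarrow> y \<in> Qn \<Longrightarrow> \<psi> (x + y) = \<psi> x + \<psi> y"
proof -
  assume x: "x \<in> Qn" and y: "y \<in> Qn"
  have px: "\<psi> x \<in> Qn" and py: "\<psi> y \<in> Qn" using psi_maps x y by auto
  have "g (\<psi> x + \<psi> y) = x + y" using g_add[OF px py] g_psi x y by simp
  then have "\<psi> (g (\<psi> x + \<psi> y)) = \<psi> (x + y)" by simp
  then show ?thesis using psi_g[OF Qn_add[OF px py]] by simp
qed

lemma psi_smult: "x \<in> Qn \<Longrightarrow> \<psi> (mat_smult c x) = mat_smult c (\<psi> x)"
proof -
  assume x: "x \<in> Qn"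
  have px: "\<psi> x \<in> Qn" using psi_maps x by auto
  have "g (mat_smult c (\<psi> x)) = mat_smult c x" using shift_homog(2)[OF px] g_psi x by simp
  then have "\<psi> (g (mat_smult c (\<psi> x))) = \<psi> (mat_smult c x)" by simp
  then show ?thesis using psi_g[OF Qn_smult[OF px]] by simp
qed

end

context setting
begin

lemma phi0: "\<phi> 0 = 0"
proof -
  define B where "B = \<phi> 0"
  have BQ: "B \<in> Qn" unfolding B_def using phi_maps Qn_zero by blast
  have dB: "det (B + w) = det (g w)" if "w \<in> Qn" for w
    unfolding B_def using S2[OF Qn_zero that] by simp
  show ?thesis unfolding B_def[symmetric]
  proof (rule Lin_test_zero[OF n_even char_not_2 fsz nN1 BQ])
    fix z :: "'a^'n^'n" assume z: "z \<in> Qn" "det z \<noteq> 0"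
    have val: "poly (det (PM B z)) \<mu> = poly [:det (B + z):] \<mu>" if mu: "\<mu> \<noteq> 0" for \<mu>
    proof -
      have zq: "mat_smult (1/\<mu>) z \<in> Qn" using z(1) by (rule Qn_smult)
      have "z + mat_smult \<mu> B = mat_smult \<mu> (B + mat_smult (1/\<mu>) z)"
        using mu by (simp add: mat_smult_def vec_eq_iff field_simps)
      then have "det (z + mat_smult \<mu> B) = \<mu> ^ CARD('n) * det (B + mat_smult (1/\<mu>) z)"
        by (simp add: det_smult)
      also have "\<dots> = \<mu> ^ CARD('n) * det (g (mat_smult (1/\<mu>) z))" using dB[OF zq] by simp
      also have "\<dots> = \<mu> ^ CARD('n) * ((1/\<mu>) ^ CARD('n) * det (g z))"
        using shift_homog(2)[OF z(1), of "1/\<mu>"] by (simp add: det_smult)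
      also have "\<dots> = det (g z)" using mu by (simp add: power_one_over field_simps)
      also have "\<dots> = det (B + z)" using dB[OF z(1)] by simp
      finally show ?thesis by (simp add: poly_det_PM)
    qed
    have "det (PM B z) = [:det (B + z):]"
      by (rule poly_eq_big_nz[OF fsz _ _ nN1 val]) (use degree_det_PM[of B z] in auto)
    then show "Lin B z = 0" using coeff_det_PM1[of B z] by simp
  qed
qed

lemma phi_psi: "x \<in> Qn \<Longrightarrow> \<phi> x = \<psi> x"
proof -
  assume x: "x \<in> Qn"
  have pxQ: "\<phi> x \<in> Qn" "\<psi> x \<in> Qn" using phi_maps psi_maps x by auto
  have "\<phi> x - \<psi> x = \<phi> 0"
  proof (rule det_eq_imp_eq[OF n_even char_not_2 fsz nN1 Qn_diff[OF pxQ]])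
    show "\<phi> 0 \<in> Qn" using phi_maps Qn_zero by blast
    fix z :: "'a^'n^'n" assume z: "z \<in> Qn"
    define y where "y = g z - x"
    have yQ: "y \<in> Qn" unfolding y_def using g_Qn[OF z] x by (rule Qn_diff)
    have "\<psi> (y + x) = \<psi> y + \<psi> x" by (rule psi_add[OF yQ x])
    moreover have "y + x = g z" unfolding y_def by simp
    ultimately have py: "\<psi> y = z - \<psi> x" using psi_g[OF z] by (simp add: algebra_simps)
    have "\<phi> x - \<psi> x + z = \<phi> x + \<psi> y" unfolding py by (simp add: algebra_simps)
    then have "det (\<phi> x - \<psi> x + z) = det (\<phi> x + \<psi> y)" by (rule arg_cong[where f=det])
    also have "\<dots> = det (x + y)" using det_pres x yQ by blast
    also have "\<dots> = det (g z)" unfolding y_def by simp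
    also have "\<dots> = det (\<phi> 0 + z)" using S2[OF Qn_zero z] by simp
    finally show "det (\<phi> x - \<psi> x + z) = det (\<phi> 0 + z)" .
  qed
  then show ?thesis using phi0 by simp
qed

end

theorem theorem1p4:
  fixes \<phi> \<psi> :: "'a::field^'n^'n \<Rightarrow> 'a^'n^'n"
  assumes n_even: "even CARD('n)"
    and char_not_2: "(2::'a) \<noteq> 0"
    and field_size: "infinite (UNIV :: 'a set) \<or> card (UNIV :: 'a set) \<ge> CARD('n)^2 + 1"
    and phi_maps: "\<forall>x\<in>Qn. \<phi> x \<in> Qn"
    and psi_maps: "\<forall>x\<in>Qn. \<psi> x \<in> Qn"
    and psi_surj: "\<psi> ` Qn = Qn"
    and psi_zero: "\<psi> 0 = 0"
    and det_pres: "\<forall>x\<in>Qn. \<forall>y\<in>Qn. det (\<phi> x + \<psi> y) = det (x + y)"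
  shows "(\<forall>x\<in>Qn. \<phi> x = \<psi> x) \<and> bij_betw \<psi> Qn Qn \<and> linear_on_Qn \<psi>
         \<and> (\<forall>x\<in>Qn. det (\<psi> x) = det x)"
proof -
  have "setting \<phi> \<psi>" unfolding setting_def using assms by blast
  then interpret setting \<phi> \<psi> .
  have c1: "\<forall>x\<in>Qn. \<phi> x = \<psi> x" using phi_psi by blast
  have c2: "bij_betw \<psi> Qn Qn" unfolding bij_betw_def using psi_inj psi_surj by blast
  have c3: "linear_on_Qn \<psi>" unfolding linear_on_Qn_def using psi_add psi_smult by blast
  have c4: "\<forall>x\<in>Qn. det (\<psi> x) = det x"
  proof
    fix x :: "'a^'n^'n" assume x: "x \<in> Qn"
    have "det (\<phi> x + \<psi> 0) = det (x + 0)" using det_pres x Qn_zero by blast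
    then show "det (\<psi> x) = det x" using phi_psi[OF x] psi_zero by simp
  qed
  show ?thesis using c1 c2 c3 c4 by blast
qed


end
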